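(* Assume condition (ii): $k(0)=\alpha\in(2,\infty)$. Then there exist $c>0$ and $h_0>0$ such that $\inf_{|u|\le h^{-1}}|\varphi(u)|\ge c\,h^{\alpha}$ for all $h\in(0,h_0]$.
   Context: $\nu$ is a finite Borel measure on $(0,\infty)$ with $\int_{(2,\infty)}\log x\,\nu(dx)<\infty$ (the Lévy measure of a compound Poisson subordinator), $k(x)=\nu((x,\infty))$ for $x\ge0$, and $\varphi(t)=\exp\big(\int_0^\infty(e^{itx}-1)\frac{k(x)}{x}dx\big)$ is the characteristic function of the stationary distribution of the OU process $dX_t=-\lambda X_tdt+dJ_{\lambda t}$ driven by the compound Poisson process $J$ with Lévy measure $\nu$. *)

theory Defs
  imports "HOL-Analysis.Analysis"
begin

definition kfun :: "real measure \<Rightarrow> real \<Rightarrow> real" where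
  "kfun \<nu> x = measure \<nu> {x<..}"

definition phi :: "real measure \<Rightarrow> real \<Rightarrow> complex" where
  "phi \<nu> t = exp (\<integral>x\<in>{0<..}. (exp (\<i> * complex_of_real (t * x)) - 1)
                       * complex_of_real (kfun \<nu> x / x) \<partial>lborel)"

end

theory Submission imports Defs begin

lemma one_minus_cos_le: "1 - cos (t::real) \<le> t^2 / 2"
proof -
  have "cos t = 1 - 2 * sin (t/2) ^ 2" using cos_double_sin[of "t/2"] by simp
  moreover have "sin (t/2)^2 \<le> (t/2)^2"
    using abs_sin_x_le_abs_x[of "t/2"] by (metis abs_ge_zero power2_abs power_mono)
  ultimately show ?thesis by (simp add: power_divide)
qed

lemma H_deriv:
  fixes U x :: real assumes "U > 0" "x > 0"
  shows "((\<lambda>x. ln x - sin (U*x)/(U*x) - 1/(U*x)) has_real_derivative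
     (1/x - cos (U*x)/x + sin (U*x)/(U*x^2) + 1/(U*x^2))) (at x)"
  using assms
  apply (auto intro!: derivative_eq_intros)
  apply (auto simp: field_simps power2_eq_square)
  done

lemma cos_part_ge1:
  fixes U :: real assumes U: "U \<ge> 1"
  shows "(\<integral>\<^sup>+ x. ennreal (indicator {0<..1} x * (1 - cos (U*x)) / x) \<partial>lborel) \<le> ennreal (ln U + 4)"
proof -
  define h where "h x = 1/x - cos (U*x)/x + sin (U*x)/(U*x^2) + 1/(U*x^2)" for x
  define H where "H x = ln x - sin (U*x)/(U*x) - 1/(U*x)" for x
  have Upos: "U > 0" using U by simp
  have "(\<integral>\<^sup>+ x. ennreal (indicator {0<..1} x * (1 - cos (U*x)) / x) \<partial>lborel)
     \<le> (\<integral>\<^sup>+ x. ennreal (U^2 * x / 2) * indicator {0..1/U} x + ennreal (h x) * indicator {1/U..1} x \<partial>lborel)"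
  proof (rule nn_integral_mono)
    fix x :: real
    show "ennreal (indicator {0<..1} x * (1 - cos (U*x)) / x)
      \<le> ennreal (U^2 * x / 2) * indicator {0..1/U} x + ennreal (h x) * indicator {1/U..1} x"
    proof (cases "0 < x \<and> x \<le> 1")
      case False thus ?thesis by (auto simp: indicator_def)
    next
      case True
      hence x: "0 < x" "x \<le> 1" by auto
      have hge: "(1 - cos (U*x))/x \<le> h x"
      proof -
        have "sin (U*x)/(U*x^2) + 1/(U*x^2) = (sin (U*x) + 1)/(U*x^2)" by (simp add: add_divide_distrib)
        also have "\<dots> \<ge> 0" using sin_ge_minus_one[of "U*x"] Upos x by (intro divide_nonneg_pos) (linarith, auto)
        finally show ?thesis unfolding h_def by (simp add: diff_divide_distrib)
      qed
      show ?thesis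
      proof (cases "x \<le> 1/U")
        case True
        have "(1 - cos (U*x))/x \<le> ((U*x)^2/2)/x" using one_minus_cos_le[of "U*x"] x
          by (intro divide_right_mono) auto
        also have "\<dots> = U^2*x/2" using x by (simp add: power2_eq_square)
        finally have "indicator {0<..1} x * (1 - cos (U*x)) / x \<le> U^2*x/2" using x by simp
        hence "ennreal (indicator {0<..1} x * (1 - cos (U*x)) / x) \<le> ennreal (U^2*x/2) * indicator {0..1/U} x"
          using True x by (simp add: indicator_def ennreal_leI)
        thus ?thesis by (rule order_trans) simp
      next
        case False
        thus ?thesis using x hge by (auto simp: indicator_def intro!: ennreal_leI)
      qed
    qed
  qed
  also have "\<dots> = (\<integral>\<^sup>+ x. ennreal (U^2 * x / 2) * indicator {0..1/U} x \<partial>lborel)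
      + (\<integral>\<^sup>+ x. ennreal (h x) * indicator {1/U..1} x \<partial>lborel)"
    unfolding h_def by (intro nn_integral_add) auto
  also have "(\<integral>\<^sup>+ x. ennreal (U^2 * x / 2) * indicator {0..1/U} x \<partial>lborel) = (U^2*(1/U)^2/4) - U^2*0^2/4"
    using Upos by (intro nn_integral_FTC_Icc) (auto intro!: derivative_eq_intros simp: power2_eq_square)
  also have "(\<integral>\<^sup>+ x. ennreal (h x) * indicator {1/U..1} x \<partial>lborel) = H 1 - H (1/U)"
  proof (rule nn_integral_FTC_Icc)
    show "h \<in> borel_measurable borel" unfolding h_def by measurable
    fix x assume x: "x \<in> {1/U..1}"
    hence xp: "x > 0" using Upos by (auto intro: less_le_trans[of 0 "1/U"])
    show "(H has_real_derivative h x) (at x)" unfolding H_def h_def using H_deriv[OF Upos xp] .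
    have "sin (U*x)/(U*x^2) + 1/(U*x^2) = (sin (U*x) + 1)/(U*x^2)" by (simp add: add_divide_distrib)
    also have "\<dots> \<ge> 0" using sin_ge_minus_one[of "U*x"] Upos xp by (intro divide_nonneg_pos) (linarith, auto)
    moreover have "1/x - cos (U*x)/x \<ge> 0" using xp cos_le_one[of "U*x"] by (simp add: diff_divide_distrib[symmetric])
    ultimately show "0 \<le> h x" unfolding h_def by linarith
  qed (use Upos U in \<open>auto simp: field_simps\<close>)
  also have "H 1 - H (1/U) \<le> ln U + 3"
  proof -
    have "H 1 = - sin U / U - 1/U" unfolding H_def by simp
    moreover have "- sin U / U \<le> 1"
    proof -
      have "- sin U \<le> U" using U sin_ge_minus_one[of U] by linarith
      thus ?thesis using Upos by (simp add: le_divide_eq)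
    qed
    moreover have "1/U > 0" using Upos by simp
    moreover have "H (1/U) = - ln U - sin 1 - 1" unfolding H_def using Upos by (simp add: ln_div)
    moreover have "sin 1 \<le> (1::real)" by simp
    ultimately show ?thesis by linarith
  qed
  hence "ennreal (H 1 - H (1/U)) \<le> ennreal (ln U + 3)" by (rule ennreal_leI)
  hence "ennreal (U^2*(1/U)^2/4 - U^2*0^2/4) + ennreal (H 1 - H (1/U)) \<le> ennreal (1/4) + ennreal (ln U + 3)"
    using Upos by (intro add_mono) (auto simp: power2_eq_square)
  also have "\<dots> = ennreal (ln U + 4 - 3/4)" using U by (subst ennreal_plus[symmetric]) auto
  also have "\<dots> \<le> ennreal (ln U + 4)" by (intro ennreal_leI) auto
  finally show ?thesis by simp
qed


lemma cos_part_le1: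
  fixes U :: real assumes U: "0 \<le> U" "U \<le> 1"
  shows "(\<integral>\<^sup>+ x. ennreal (indicator {0<..1} x * (1 - cos (U*x)) / x) \<partial>lborel) \<le> ennreal 4"
proof -
  have "(\<integral>\<^sup>+ x. ennreal (indicator {0<..1} x * (1 - cos (U*x)) / x) \<partial>lborel)
     \<le> (\<integral>\<^sup>+ x. ennreal (x / 2) * indicator {0..1} x \<partial>lborel)"
  proof (rule nn_integral_mono)
    fix x :: real
    show "ennreal (indicator {0<..1} x * (1 - cos (U*x)) / x) \<le> ennreal (x / 2) * indicator {0..1} x"
    proof (cases "0 < x \<and> x \<le> 1")
      case False thus ?thesis by (auto simp: indicator_def)
    next
      case True
      hence x: "0 < x" "x \<le> 1" by auto
      have "(1 - cos (U*x))/x \<le> ((U*x)^2/2)/x" using one_minus_cos_le[of "U*x"] x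
        by (intro divide_right_mono) auto
      also have "\<dots> = U^2*x/2" using x by (simp add: power2_eq_square)
      also have "\<dots> \<le> x/2" using U x by (simp add: power_le_one)
      finally show ?thesis using x by (simp add: indicator_def ennreal_leI)
    qed
  qed
  also have "\<dots> = ennreal (1^2/4 - 0^2/4)"
    by (intro nn_integral_FTC_Icc) (auto intro!: derivative_eq_intros simp: power2_eq_square)
  also have "\<dots> \<le> ennreal 4" by (intro ennreal_leI) auto
  finally show ?thesis .
qed

lemma cos_part:
  fixes U :: real assumes U: "0 \<le> U"
  shows "(\<integral>\<^sup>+ x. ennreal (indicator {0<..1} x * (1 - cos (U*x)) / x) \<partial>lborel) \<le> ennreal (max 0 (ln U) + 4)"
proof (cases "U \<le> 1")
  case True
  have "ennreal 4 \<le> ennreal (max 0 (ln U) + 4)" by (intro ennreal_leI) simp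
  then show ?thesis using cos_part_le1[OF U True] by (rule order_trans[rotated])
next
  case False
  then show ?thesis using cos_part_ge1[of U] by (rule_tac order_trans) (auto intro!: ennreal_leI)
qed

lemma tail_finite:
  fixes \<nu> :: "real measure"
  assumes sets_nu: "sets \<nu> = sets borel"
    and finite_nu: "finite_measure \<nu>"
    and log_moment: "(\<integral>\<^sup>+ x. ennreal (indicator {2<..} x * ln x) \<partial>\<nu>) < \<infinity>"
  shows "(\<integral>\<^sup>+ x. ennreal (indicator {1<..} x * kfun \<nu> x / x) \<partial>lborel) < \<infinity>"
proof -
  interpret finite_measure \<nu> by fact
  interpret P: pair_sigma_finite lborel \<nu>
    by (intro pair_sigma_finite.intro lborel.sigma_finite_measure_axioms sigma_finite_measure_axioms)
  define f where "f p = ennreal (indicator {1<..} (fst p) / fst p) * indicator {p. fst p < snd p} p" for p :: "real \<times> real"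
  have fm: "f \<in> borel_measurable (lborel \<Otimes>\<^sub>M \<nu>)"
  proof -
    have "f \<in> borel_measurable (lborel \<Otimes>\<^sub>M borel)"
      unfolding f_def by measurable
    thus ?thesis by (subst measurable_cong_sets[OF sets_pair_measure_cong[OF refl sets_nu] refl])
  qed
  have "(\<integral>\<^sup>+ x. ennreal (indicator {1<..} x * kfun \<nu> x / x) \<partial>lborel)
      = (\<integral>\<^sup>+ x. (\<integral>\<^sup>+ y. f (x, y) \<partial>\<nu>) \<partial>lborel)"
  proof (rule nn_integral_cong)
    fix x :: real
    have "(\<integral>\<^sup>+ y. f (x, y) \<partial>\<nu>) = ennreal (indicator {1<..} x / x) * (\<integral>\<^sup>+ y. indicator {x<..} y \<partial>\<nu>)"
      unfolding f_def by (subst nn_integral_cmult[symmetric])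
        (auto simp: indicator_def measurable_cong_sets[OF sets_nu refl] intro!: nn_integral_cong)
    also have "\<dots> = ennreal (indicator {1<..} x / x) * ennreal (kfun \<nu> x)"
      using sets_nu by (simp add: kfun_def emeasure_eq_measure)
    also have "\<dots> = ennreal (indicator {1<..} x * kfun \<nu> x / x)"
      by (auto simp: indicator_def ennreal_mult'[symmetric])
    finally show "ennreal (indicator {1<..} x * kfun \<nu> x / x) = (\<integral>\<^sup>+ y. f (x, y) \<partial>\<nu>)" ..
  qed
  also have "\<dots> = (\<integral>\<^sup>+ y. (\<integral>\<^sup>+ x. f (x, y) \<partial>lborel) \<partial>\<nu>)"
    using P.Fubini[OF fm] by simp
  also have "\<dots> \<le> (\<integral>\<^sup>+ y. ennreal (indicator {2<..} y * ln y) + ennreal (ln 2) \<partial>\<nu>)"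
  proof (rule nn_integral_mono)
    fix y :: real
    have "(\<integral>\<^sup>+ x. f (x, y) \<partial>lborel) \<le> (\<integral>\<^sup>+ x. ennreal (1/x) * indicator {1..max 1 y} x \<partial>lborel)"
      by (intro nn_integral_mono) (auto simp: f_def indicator_def)
    also have "\<dots> = ennreal (ln (max 1 y) - ln 1)"
      by (intro nn_integral_FTC_Icc) (auto intro!: derivative_eq_intros)
    also have "\<dots> \<le> ennreal (indicator {2<..} y * ln y) + ennreal (ln 2)"
    proof (cases "y > 2")
      case True
      thus ?thesis by (auto simp: indicator_def max_def)
    next
      case False
      hence "ln (max 1 y) - ln 1 \<le> ln 2" by (auto simp: max_def)
      thus ?thesis using False by (auto simp: indicator_def intro!: ennreal_leI)
    qed
    finally show "(\<integral>\<^sup>+ x. f (x, y) \<partial>lborel) \<le> ennreal (indicator {2<..} y * ln y) + ennreal (ln 2)" .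
  qed
  also have "\<dots> = (\<integral>\<^sup>+ y. ennreal (indicator {2<..} y * ln y) \<partial>\<nu>) + (\<integral>\<^sup>+ y. ennreal (ln 2) \<partial>\<nu>)"
    by (intro nn_integral_add) (auto simp: measurable_cong_sets[OF sets_nu refl])
  also have "\<dots> < \<infinity>"
    using log_moment by (simp add: ennreal_mult_eq_top_iff emeasure_finite less_top[symmetric])
  finally show ?thesis .
qed


lemma ennreal_split_le:
  fixes g a b c :: real
  assumes "g \<le> c * a + 2 * b" "0 \<le> a" "0 \<le> b" "0 \<le> c"
  shows "ennreal g \<le> ennreal c * ennreal a + 2 * ennreal b"
proof -
  have "ennreal g \<le> ennreal (c * a + 2 * b)" using assms(1) by (rule ennreal_leI)
  also have "\<dots> = ennreal (c*a) + ennreal (2*b)" using assms by (intro ennreal_plus) auto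
  also have "\<dots> = ennreal c * ennreal a + 2 * ennreal b" using assms by (simp add: ennreal_mult)
  finally show ?thesis .
qed

lemma main_bound:
  fixes \<nu> :: "real measure" and \<alpha> :: real
  assumes sets_nu: "sets \<nu> = sets borel"
    and finite_nu: "finite_measure \<nu>"
    and k0: "kfun \<nu> 0 = \<alpha>"
    and kmeas: "kfun \<nu> \<in> borel_measurable borel"
    and kbd: "\<And>x. 0 \<le> x \<Longrightarrow> 0 \<le> kfun \<nu> x \<and> kfun \<nu> x \<le> \<alpha>"
    and tail: "(\<integral>\<^sup>+ x. ennreal (indicator {1<..} x * kfun \<nu> x / x) \<partial>lborel) = ennreal K"
    and K: "K \<ge> 0"
  shows "cmod (phi \<nu> u) \<ge> exp (- (\<alpha> * (max 0 (ln \<bar>u\<bar>) + 4) + 2 * K))"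
proof -
  have apos: "\<alpha> \<ge> 0" using kbd[of 0] by simp
  define B where "B = \<alpha> * (max 0 (ln \<bar>u\<bar>) + 4) + 2 * K"
  have Bpos: "B \<ge> 0" unfolding B_def using apos K by simp
  define F where "F x = indicator {0<..} x *\<^sub>R ((exp (\<i> * complex_of_real (u * x)) - 1)
                       * complex_of_real (kfun \<nu> x / x))" for x :: real
  have phi_eq: "phi \<nu> u = exp (integral\<^sup>L lborel F)"
    unfolding phi_def F_def set_lebesgue_integral_def by simp
  show ?thesis
  proof (cases "integrable lborel F")
    case False
    hence "phi \<nu> u = 1" unfolding phi_eq by (simp add: not_integrable_integral_eq)
    thus ?thesis using Bpos unfolding B_def by simp
  next
    case True
    define g where "g x = indicator {0<..} x * (1 - cos (u * x)) * kfun \<nu> x / x" for x :: real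
    have ReF: "Re (F x) = - g x" for x
      unfolding F_def g_def by (simp add: Re_exp indicator_def algebra_simps add_divide_distrib[symmetric])
    have gm: "g \<in> borel_measurable lborel" unfolding g_def using kmeas by measurable
    have gnn: "0 \<le> g x" for x
      unfolding g_def using kbd[of x] by (auto simp: indicator_def intro!: divide_nonneg_pos mult_nonneg_nonneg)
    have "Re (integral\<^sup>L lborel F) = integral\<^sup>L lborel (\<lambda>x. Re (F x))"
      using integral_Re[OF True] by simp
    also have "\<dots> = - integral\<^sup>L lborel g" by (simp add: ReF)
    finally have ReI: "Re (integral\<^sup>L lborel F) = - integral\<^sup>L lborel g" .
    have "(\<integral>\<^sup>+ x. ennreal (g x) \<partial>lborel)
        \<le> (\<integral>\<^sup>+ x. ennreal \<alpha> * ennreal (indicator {0<..1} x * (1 - cos (\<bar>u\<bar>*x)) / x)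
             + 2 * ennreal (indicator {1<..} x * kfun \<nu> x / x) \<partial>lborel)"
    proof (rule nn_integral_mono)
      fix x :: real
      have cu: "cos (u*x) = cos (\<bar>u\<bar>*x)" by (cases "u \<ge> 0") auto
      have "g x \<le> \<alpha> * (indicator {0<..1} x * (1 - cos (\<bar>u\<bar>*x)) / x) + 2 * (indicator {1<..} x * kfun \<nu> x / x)"
      proof (cases "x > 0")
        case False thus ?thesis unfolding g_def by (simp add: indicator_def)
      next
        case xp: True
        have k: "0 \<le> kfun \<nu> x" "kfun \<nu> x \<le> \<alpha>" using kbd[of x] xp by auto
        have c: "0 \<le> 1 - cos (\<bar>u\<bar>*x)" "1 - cos (\<bar>u\<bar>*x) \<le> 2" using cos_le_one[of "\<bar>u\<bar>*x"] cos_ge_minus_one[of "\<bar>u\<bar>*x"] by auto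
        show ?thesis
        proof (cases "x \<le> 1")
          case True
          have "(1 - cos (\<bar>u\<bar>*x)) * kfun \<nu> x \<le> (1 - cos (\<bar>u\<bar>*x)) * \<alpha>" using c k by (intro mult_left_mono) auto
          hence "(1 - cos (\<bar>u\<bar>*x)) * kfun \<nu> x / x \<le> \<alpha> * ((1 - cos (\<bar>u\<bar>*x)) / x)"
            using xp by (simp add: divide_right_mono mult.commute)
          thus ?thesis using True xp unfolding g_def cu by (simp add: indicator_def)
        next
          case False
          have "(1 - cos (\<bar>u\<bar>*x)) * kfun \<nu> x \<le> 2 * kfun \<nu> x" using c k by (intro mult_right_mono) auto
          hence "(1 - cos (\<bar>u\<bar>*x)) * kfun \<nu> x / x \<le> 2 * (kfun \<nu> x / x)"
            using xp by (simp add: divide_right_mono)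
          thus ?thesis using False xp unfolding g_def cu by (simp add: indicator_def)
        qed
      qed
      moreover have "0 \<le> indicator {0<..1} x * (1 - cos (\<bar>u\<bar>*x)) / x"
        by (auto simp: indicator_def)
      moreover have "0 \<le> indicator {1<..} x * kfun \<nu> x / x"
        using kbd[of x] by (auto simp: indicator_def)
      ultimately show "ennreal (g x) \<le> ennreal \<alpha> * ennreal (indicator {0<..1} x * (1 - cos (\<bar>u\<bar>*x)) / x)
             + 2 * ennreal (indicator {1<..} x * kfun \<nu> x / x)"
        using apos by (intro ennreal_split_le) auto
    qed
    also have "\<dots> = ennreal \<alpha> * (\<integral>\<^sup>+ x. ennreal (indicator {0<..1} x * (1 - cos (\<bar>u\<bar>*x)) / x) \<partial>lborel)
          + 2 * (\<integral>\<^sup>+ x. ennreal (indicator {1<..} x * kfun \<nu> x / x) \<partial>lborel)"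
      using kmeas by (subst nn_integral_add) (auto simp: nn_integral_cmult)
    also have "\<dots> \<le> ennreal \<alpha> * ennreal (max 0 (ln \<bar>u\<bar>) + 4) + 2 * ennreal K"
      unfolding tail by (intro add_mono mult_left_mono cos_part) auto
    also have "\<dots> = ennreal B"
      unfolding B_def using apos K by (subst ennreal_plus) (auto simp: ennreal_mult)
    finally have "integral\<^sup>L lborel g \<le> B"
      using gm gnn Bpos by (subst integral_eq_nn_integral) (auto intro: enn2real_leI)
    hence "Re (integral\<^sup>L lborel F) \<ge> - B" using ReI by simp
    thus ?thesis unfolding phi_eq B_def by simp
  qed
qed


theorem lemmaL2:
  fixes \<nu> :: "real measure" and \<alpha> :: real
  assumes sets_nu: "sets \<nu> = sets borel"
    and finite_nu: "finite_measure \<nu>"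
    and supp_nu: "emeasure \<nu> {..0} = 0"
    and log_moment: "(\<integral>\<^sup>+ x. ennreal (indicator {2<..} x * ln x) \<partial>\<nu>) < \<infinity>"
    and k0: "kfun \<nu> 0 = \<alpha>"
    and alpha_gt: "\<alpha> > 2"
  shows "\<exists>c>0. \<exists>h0>0. \<forall>h. 0 < h \<and> h \<le> h0 \<longrightarrow>
           Inf ((\<lambda>u. cmod (phi \<nu> u)) ` {u. \<bar>u\<bar> \<le> 1 / h}) \<ge> c * h powr \<alpha>"
proof -
  interpret finite_measure \<nu> by fact
  have kmono: "kfun \<nu> y \<le> kfun \<nu> x" if "x \<le> y" for x y
    unfolding kfun_def using that sets_nu by (intro finite_measure_mono) auto
  have kmeas: "kfun \<nu> \<in> borel_measurable borel"
  proof -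
    have "(\<lambda>x. - kfun \<nu> x) \<in> borel_measurable borel"
      by (rule borel_measurable_mono) (auto simp: mono_def intro: kmono)
    hence "(\<lambda>x. - (- kfun \<nu> x)) \<in> borel_measurable borel" by measurable
    thus ?thesis by simp
  qed
  have kbd: "0 \<le> kfun \<nu> x \<and> kfun \<nu> x \<le> \<alpha>" if "0 \<le> x" for x
    using kmono[OF that] k0 by (simp add: kfun_def)
  obtain K where tailK: "(\<integral>\<^sup>+ x. ennreal (indicator {1<..} x * kfun \<nu> x / x) \<partial>lborel) = ennreal K"
    and K: "K \<ge> 0"
  proof -
    from tail_finite[OF sets_nu finite_nu log_moment]
    obtain K where "(\<integral>\<^sup>+ x. ennreal (indicator {1<..} x * kfun \<nu> x / x) \<partial>lborel) = ennreal K" "0 \<le> K"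
      by (cases "(\<integral>\<^sup>+ x. ennreal (indicator {1<..} x * kfun \<nu> x / x) \<partial>lborel)" rule: ennreal_cases) auto
    thus ?thesis using that by blast
  qed
  have mb: "cmod (phi \<nu> u) \<ge> exp (- (\<alpha> * (max 0 (ln \<bar>u\<bar>) + 4) + 2 * K))" for u
    by (rule main_bound[OF sets_nu finite_nu k0 kmeas kbd tailK K])
  define c where "c = exp (- (4 * \<alpha> + 2 * K))"
  have cpos: "c > 0" unfolding c_def by simp
  have main: "\<forall>h. 0 < h \<and> h \<le> 1 \<longrightarrow> c * h powr \<alpha> \<le> Inf ((\<lambda>u. cmod (phi \<nu> u)) ` {u. \<bar>u\<bar> \<le> 1 / h})"
  proof (intro allI impI)
    fix h :: real assume h: "0 < h \<and> h \<le> 1"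
    show "c * h powr \<alpha> \<le> Inf ((\<lambda>u. cmod (phi \<nu> u)) ` {u. \<bar>u\<bar> \<le> 1 / h})"
    proof (rule cInf_greatest)
      show "(\<lambda>u. cmod (phi \<nu> u)) ` {u. \<bar>u\<bar> \<le> 1 / h} \<noteq> {}" using h by (auto intro!: exI[of _ 0])
      fix y assume "y \<in> (\<lambda>u. cmod (phi \<nu> u)) ` {u. \<bar>u\<bar> \<le> 1 / h}"
      then obtain u where u: "\<bar>u\<bar> \<le> 1/h" and y: "y = cmod (phi \<nu> u)" by auto
      have L: "max 0 (ln \<bar>u\<bar>) \<le> - ln h"
      proof (cases "u = 0")
        case True thus ?thesis using h by simp
      next
        case False
        hence "ln \<bar>u\<bar> \<le> ln (1/h)" using u h by (subst ln_le_cancel_iff) auto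
        moreover have "0 \<le> - ln h" using h by simp
        ultimately show ?thesis using h by (simp add: ln_div)
      qed
      have apos: "\<alpha> \<ge> 0" using alpha_gt by simp
      have "c * h powr \<alpha> = exp (- (\<alpha> * (- ln h + 4) + 2 * K))"
        proof -
        have "h powr \<alpha> = exp (\<alpha> * ln h)" using h by (simp add: powr_def)
        hence "c * h powr \<alpha> = exp (- (4 * \<alpha> + 2 * K) + \<alpha> * ln h)" unfolding c_def by (simp add: exp_add)
        also have "- (4 * \<alpha> + 2 * K) + \<alpha> * ln h = - (\<alpha> * (- ln h + 4) + 2 * K)" by (simp add: algebra_simps)
        finally show ?thesis .
      qed
      also have "\<dots> \<le> exp (- (\<alpha> * (max 0 (ln \<bar>u\<bar>) + 4) + 2 * K))"
        using mult_left_mono[OF L apos] by (simp add: algebra_simps)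
      also have "\<dots> \<le> y" using mb[of u] y by simp
      finally show "c * h powr \<alpha> \<le> y" .
    qed
  qed
  show ?thesis using cpos main by (intro exI[of _ c] conjI exI[of _ "1::real"]) auto
qed

end
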